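(* For every vertex $(r,t,s)$ of the Farey tree $\mathrm{F}\mathbb T$, one has $\Omega(t)=\Omega(r)^{-1}\,xyz\,\Omega(s)^{-1}$ in $\mathfrak F_3$.
   Context: $\mathfrak F_3$ is the free group on $\{x,y,z\}$. Farey tree $\mathrm{F}\mathbb T$: rooted planar binary tree with root $(\frac01,\frac11,\frac10)$, and each vertex $(\frac ab,\frac cd,\frac ef)$ has left child $(\frac ab,\frac{a+c}{b+d},\frac cd)$ and right child $(\frac cd,\frac{c+e}{d+f},\frac ef)$; $\frac10$ represents $\infty$. Every positive rational $t$ occurs as the middle entry of exactly one vertex. Word tree $\mathrm{W}\mathbb T$: rooted planar binary tree with vertices in $\mathfrak F_3^3$, root $(x,y,z)$, and a vertex $(a,b,c)$ has left child $(a,bcb^{-1},b)$ and right child $(b,b^{-1}ab,c)$. $\Omega(t)$ for positive rational $t$: the middle entry of the vertex of $\mathrm{W}\mathbb T$ at the same position (same sequence of left/right moves from the root) as the unique vertex of $\mathrm{F}\mathbb T$ with middle entry $t$; $\Omega(\frac01)=x$, $\Omega(\frac10)=z$. *)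

theory Defs
  imports Complex_Main
begin

datatype gen = GX | GY | GZ

text \<open>A letter is a generator together with an exponent sign (True = +1, False = -1).\<close>

type_synonym letter = "gen \<times> bool"
type_synonym word = "letter list"

definition inv_letter :: "letter \<Rightarrow> letter" where
  "inv_letter l = (fst l, \<not> snd l)"

definition cons_red :: "letter \<Rightarrow> word \<Rightarrow> word" where
  "cons_red l w = (case w of [] \<Rightarrow> [l] | m # w' \<Rightarrow> if m = inv_letter l then w' else l # w)"

definition reduce :: "word \<Rightarrow> word" where
  "reduce w = foldr cons_red w []"

definition reduced :: "word \<Rightarrow> bool" where
  "reduced w \<longleftrightarrow> (\<forall>i. Suc i < length w \<longrightarrow> w ! Suc i \<noteq> inv_letter (w ! i))"

definition F3 :: "word set" where
  "F3 = {w. reduced w}"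

definition fmult :: "word \<Rightarrow> word \<Rightarrow> word" (infixl "\<cdot>" 70) where
  "fmult u v = reduce (u @ v)"

definition finv :: "word \<Rightarrow> word" where
  "finv w = rev (map inv_letter w)"

definition gx :: word where "gx = [(GX, True)]"
definition gy :: word where "gy = [(GY, True)]"
definition gz :: word where "gz = [(GZ, True)]"

section \<open>Trees: a vertex is addressed by its path from the root (False = left, True = right)\<close>

type_synonym path = "bool list"

text \<open>Farey tree: fractions a/b are pairs (a,b) of naturals; (1,0) represents infinity.
  The path is read from the root, first move first.\<close>

fun farey_step :: "bool \<Rightarrow> (nat\<times>nat) \<times> (nat\<times>nat) \<times> (nat\<times>nat) \<Rightarrow> (nat\<times>nat) \<times> (nat\<times>nat) \<times> (nat\<times>nat)" where
  "farey_step False ((a,b),(c,d),(e,f)) = ((a,b),(a+c,b+d),(c,d))"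
| "farey_step True ((a,b),(c,d),(e,f)) = ((c,d),(c+e,d+f),(e,f))"

definition farey_vertex :: "path \<Rightarrow> (nat\<times>nat) \<times> (nat\<times>nat) \<times> (nat\<times>nat)" where
  "farey_vertex p = fold farey_step p ((0,1),(1,1),(1,0))"

fun word_step :: "bool \<Rightarrow> word \<times> word \<times> word \<Rightarrow> word \<times> word \<times> word" where
  "word_step False (a,b,c) = (a, b \<cdot> c \<cdot> finv b, b)"
| "word_step True (a,b,c) = (b, finv b \<cdot> a \<cdot> b, c)"

definition word_vertex :: "path \<Rightarrow> word \<times> word \<times> word" where
  "word_vertex p = fold word_step p (gx, gy, gz)"

definition frac_val :: "nat \<times> nat \<Rightarrow> rat" where
  "frac_val q = of_nat (fst q) / of_nat (snd q)"

text \<open>Omega on non-negative rationals: Omega 0 = x, and for t > 0 the middle entry of the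
  word-tree vertex at the (unique) position of the Farey vertex with middle entry t.\<close>
definition Omega :: "rat \<Rightarrow> word" where
  "Omega t = (if t = 0 then gx
              else fst (snd (word_vertex (THE p. frac_val (fst (snd (farey_vertex p))) = t))))"

text \<open>Omega on Farey entries, with (a,0) (i.e. 1/0) standing for infinity: Omega(1/0) = z.\<close>
definition Omega_frac :: "nat \<times> nat \<Rightarrow> word" where
  "Omega_frac q = (if snd q = 0 then gz else Omega (frac_val q))"

end

theory Submission
  imports Defs
begin

lemma inv_inv[simp]: "inv_letter (inv_letter l) = l"
  by (simp add: inv_letter_def)

lemma reduce_Nil[simp]: "reduce [] = []" by (simp add: reduce_def)
lemma reduce_Cons: "reduce (l # w) = cons_red l (reduce w)" by (simp add: reduce_def)
lemma reduce_append: "reduce (u @ v) = foldr cons_red u (reduce v)" by (simp add: reduce_def)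

lemma cons_red_Nil: "cons_red l [] = [l]" by (simp add: cons_red_def)
lemma cons_red_Cons: "cons_red l (m # w) = (if m = inv_letter l then w else l # m # w)" by (simp add: cons_red_def)
lemma reduced_Nil[simp]: "reduced []" by (simp add: reduced_def)
lemma reduced_Cons: "reduced (l # w) \<longleftrightarrow> reduced w \<and> (case w of [] \<Rightarrow> True | m # _ \<Rightarrow> m \<noteq> inv_letter l)"
proof
  assume h: "reduced (l # w)"
  have "reduced w" unfolding reduced_def
  proof (intro allI impI)
    fix i assume "Suc i < length w"
    with h[unfolded reduced_def, rule_format, of "Suc i"] show "w ! Suc i \<noteq> inv_letter (w ! i)" by simp
  qed
  moreover have "(case w of [] \<Rightarrow> True | m # _ \<Rightarrow> m \<noteq> inv_letter l)"
    using h[unfolded reduced_def, rule_format, of 0] by (cases w) auto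
  ultimately show "reduced w \<and> (case w of [] \<Rightarrow> True | m # _ \<Rightarrow> m \<noteq> inv_letter l)" by simp
next
  assume h: "reduced w \<and> (case w of [] \<Rightarrow> True | m # _ \<Rightarrow> m \<noteq> inv_letter l)"
  show "reduced (l # w)" unfolding reduced_def
  proof (intro allI impI)
    fix i assume i: "Suc i < length (l # w)"
    show "(l # w) ! Suc i \<noteq> inv_letter ((l # w) ! i)"
    proof (cases i)
      case 0 then show ?thesis using h i by (cases w) auto
    next
      case (Suc j) then show ?thesis using h i unfolding reduced_def by auto
    qed
  qed
qed

lemma reduced_cons_red: "reduced w \<Longrightarrow> reduced (cons_red l w)"
  by (cases w) (auto simp: cons_red_def reduced_Cons split: list.splits)

lemma cons_red_cancel: "reduced w \<Longrightarrow> cons_red (inv_letter l) (cons_red l w) = w"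
proof (cases w)
  case Nil then show ?thesis by (simp add: cons_red_Nil cons_red_Cons)
next
  case (Cons m w')
  assume r: "reduced w"
  show ?thesis
  proof (cases "m = inv_letter l")
    case True
    show ?thesis
    proof (cases w')
      case Nil then show ?thesis using Cons True by (simp add: cons_red_Nil cons_red_Cons)
    next
      case (Cons n w'')
      have "n \<noteq> l" using r \<open>w = m # w'\<close> Cons True by (simp add: reduced_Cons)
      then show ?thesis using \<open>w = m # w'\<close> Cons True by (simp add: cons_red_Cons)
    qed
  next
    case False
    then show ?thesis using Cons by (simp add: cons_red_Cons)
  qed
qed

lemma reduced_reduce: "reduced (reduce w)"
  by (induction w) (auto simp: reduce_Cons reduced_cons_red)

lemma reduce_id: "reduced w \<Longrightarrow> reduce w = w"
  by (induction w) (auto simp: reduce_Cons reduced_Cons cons_red_def split: list.splits)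

lemma reduced_foldr: "reduced w \<Longrightarrow> reduced (foldr cons_red u w)"
  by (induction u) (auto simp: reduced_cons_red)

lemma foldr_reduce: "reduced w \<Longrightarrow> foldr cons_red (reduce u) w = foldr cons_red u w"
proof (induction u)
  case Nil then show ?case by simp
next
  case (Cons l u)
  show ?case
  proof (cases "reduce u")
    case Nil
    have "foldr cons_red u w = w" using Cons.IH[OF Cons.prems] Nil by simp
    then show ?thesis using Nil by (simp add: reduce_Cons cons_red_Nil)
  next
    case Cons2: (Cons m u')
    show ?thesis
    proof (cases "m = inv_letter l")
      case True
      have "foldr cons_red (l # u) w = cons_red l (cons_red (inv_letter l) (foldr cons_red u' w))"
        using Cons.IH[OF Cons.prems] Cons2 True by simp
      also have "\<dots> = foldr cons_red u' w"
        using cons_red_cancel[of _ "inv_letter l"] reduced_foldr[OF Cons.prems] by simp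
      finally show ?thesis using Cons2 True by (simp add: reduce_Cons cons_red_Cons)
    next
      case False
      then show ?thesis using Cons Cons2 by (simp add: reduce_Cons cons_red_Cons)
    qed
  qed
qed

lemma reduce_reduce_l[simp]: "reduce (reduce u @ v) = reduce (u @ v)"
  by (simp add: reduce_append foldr_reduce reduced_reduce)
lemma reduce_reduce_r[simp]: "reduce (u @ reduce v) = reduce (u @ v)"
  by (simp add: reduce_append reduce_id reduced_reduce)
lemma reduce_reduce[simp]: "reduce (reduce u) = reduce u"
  by (simp add: reduce_id reduced_reduce)

lemma fm_assoc: "(u \<cdot> v) \<cdot> w = u \<cdot> (v \<cdot> w)"
  unfolding fmult_def by (metis append_assoc reduce_reduce_l reduce_reduce_r)

lemma finv_Cons: "finv (l # u) = finv u @ [inv_letter l]" by (simp add: finv_def)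
lemma finv_finv[simp]: "finv (finv u) = u" by (simp add: finv_def rev_map comp_def)

lemma reduce_finv_l: "reduce (finv u @ u) = []"
proof (induction u)
  case Nil then show ?case by (simp add: finv_def)
next
  case (Cons l u)
  have "reduce (finv (l # u) @ l # u) = reduce (finv u @ reduce (inv_letter l # l # u))"
    by (simp add: finv_Cons)
  also have "reduce (inv_letter l # l # u) = reduce u"
    by (simp add: reduce_Cons cons_red_cancel reduced_reduce)
  finally show ?case using Cons by simp
qed

lemma reduce_finv_r: "reduce (u @ finv u) = []"
  using reduce_finv_l[of "finv u"] by simp

lemma cancel_r1: "(w \<cdot> finv c) \<cdot> c = reduce w"
proof -
  have "(w \<cdot> finv c) \<cdot> c = reduce (w @ reduce (finv c @ c))" by (simp add: fmult_def)
  then show ?thesis by (simp add: reduce_finv_l)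
qed
lemma cancel_l1: "a \<cdot> (finv a \<cdot> w) = reduce w"
proof -
  have "a \<cdot> (finv a \<cdot> w) = reduce (reduce (a @ finv a) @ w)" by (simp add: fmult_def)
  then show ?thesis by (simp add: reduce_finv_r)
qed
lemma reduce_fm[simp]: "reduce (u \<cdot> v) = u \<cdot> v" by (simp add: fmult_def)

definition X where "X = gx \<cdot> gy \<cdot> gz"

definition winv :: "word \<times> word \<times> word \<Rightarrow> bool" where
 "winv V = (case V of (A,B,C) \<Rightarrow> B = finv A \<cdot> X \<cdot> finv C)"

lemma winv_root: "winv (gx, gy, gz)"
proof -
  have 1: "gx \<cdot> gy = [(GX,True),(GY,True)]" by (simp add: fmult_def reduce_Cons cons_red_Cons cons_red_Nil inv_letter_def gx_def gy_def)
  have 2: "X = [(GX,True),(GY,True),(GZ,True)]" unfolding X_def 1 by (simp add: fmult_def reduce_Cons cons_red_Cons cons_red_Nil inv_letter_def gz_def)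
  have 3: "finv gx \<cdot> X = [(GY,True),(GZ,True)]" unfolding 2 by (simp add: fmult_def reduce_Cons cons_red_Cons cons_red_Nil inv_letter_def gx_def finv_def)
  have 4: "finv gx \<cdot> X \<cdot> finv gz = gy" unfolding 3 by (simp add: fmult_def reduce_Cons cons_red_Cons cons_red_Nil inv_letter_def gz_def gy_def finv_def)
  show ?thesis using 4 by (simp add: winv_def)
qed

lemma winv_step: "winv V \<Longrightarrow> winv (word_step b V)"
proof -
  obtain A B C where V: "V = (A,B,C)" by (cases V) auto
  assume "winv V"
  then have hB: "B = finv A \<cdot> X \<cdot> finv C" by (simp add: winv_def V)
  show ?thesis
  proof (cases b)
    case False
    have "B \<cdot> C = finv A \<cdot> X" using hB cancel_r1 by simp
    then have "B \<cdot> C \<cdot> finv B = finv A \<cdot> X \<cdot> finv B" by simp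
    then show ?thesis using False V by (simp add: winv_def)
  next
    case True
    have "A \<cdot> B = X \<cdot> finv C" using hB cancel_l1 by (simp add: fm_assoc)
    then have "finv B \<cdot> A \<cdot> B = finv B \<cdot> X \<cdot> finv C" by (simp add: fm_assoc)
    then show ?thesis using True V by (simp add: winv_def)
  qed
qed

lemma winv_vertex: "winv (word_vertex p)"
proof -
  have "\<And>V. winv V \<Longrightarrow> winv (fold word_step p V)"
  proof (induction p)
    case Nil then show ?case by simp
  next
    case (Cons a p) then show ?case by (simp add: winv_step)
  qed
  then show ?thesis unfolding word_vertex_def using winv_root by blast
qed

fun lt :: "nat \<times> nat \<Rightarrow> nat \<times> nat \<Rightarrow> bool" where
  "lt (a,b) (c,d) = (a*d < c*b)"

definition fok :: "(nat\<times>nat) \<times> (nat\<times>nat) \<times> (nat\<times>nat) \<Rightarrow> bool" where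
  "fok V = (case V of ((a,b),(c,d),(e,f)) \<Rightarrow> c = a+e \<and> d = b+f \<and> b>0 \<and> a*f < e*b)"

lemma fok_root: "fok ((0,1),(1,1),(1,0))" by (simp add: fok_def)

lemma fok_step: "fok V \<Longrightarrow> fok (farey_step b V)"
proof -
  assume h: "fok V"
  obtain a b' c d e f where V: "V = ((a,b'),(c,d),(e,f))" by (metis prod.exhaust)
  have "c = a+e" "d = b'+f" "b'>0" "a*f < e*b'" using h V by (auto simp: fok_def)
  then show ?thesis using V by (cases b) (auto simp: fok_def algebra_simps)
qed

lemma fok_fold: "fok V \<Longrightarrow> fok (fold farey_step q V)"
  by (induction q arbitrary: V) (auto simp: fok_step)

lemma fok_mid: "fok V \<Longrightarrow> fst (fst (snd V)) > 0 \<and> snd (fst (snd V)) > 0"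
  by (cases V) (auto simp: fok_def split: prod.splits)

lemma fok_lt: "fok (r,t,s) \<Longrightarrow> lt r t \<and> lt t s \<and> snd r > 0"
  by (cases r; cases t; cases s) (auto simp: fok_def algebra_simps)

lemma lt_trans: "snd x > 0 \<Longrightarrow> snd y > 0 \<Longrightarrow> lt x y \<Longrightarrow> lt y z \<Longrightarrow> lt x z"
proof -
  obtain a b c d e f where xyz: "x = (a,b)" "y = (c,d)" "z = (e,f)" by (metis prod.exhaust)
  assume "snd x > 0" "snd y > 0" "lt x y" "lt y z"
  then have h: "b > 0" "d > 0" "a*d < c*b" "c*f < e*d" using xyz by auto
  have "a*d*f \<le> c*b*f" using h by simp
  also have "c*b*f = c*f*b" by simp
  also have "c*f*b < e*d*b" using h by simp
  finally have "(a*f)*d < (e*b)*d" by (simp add: algebra_simps)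
  then have "a*f < e*b" by simp
  then show ?thesis using xyz by simp
qed

lemma interval: "fok (r,t,s) \<Longrightarrow> lt r (fst (snd (fold farey_step q (r,t,s)))) \<and> lt (fst (snd (fold farey_step q (r,t,s)))) s"
proof (induction q arbitrary: r t s)
  case Nil then show ?case using fok_lt by simp
next
  case (Cons b q)
  obtain a b' c d e f where V: "r = (a,b')" "t = (c,d)" "s = (e,f)" by (metis prod.exhaust)
  have ts: "lt r t" "lt t s" "snd r > 0" using fok_lt[OF Cons.prems] by auto
  have tpos: "snd t > 0" using fok_mid[OF Cons.prems] by simp
  show ?case
  proof (cases b)
    case False
    have st: "farey_step b (r,t,s) = (r, (a+c,b'+d), t)" using V False by simp
    have ok: "fok (r, (a+c,b'+d), t)" using fok_step[OF Cons.prems, of b] st by simp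
    let ?m = "fst (snd (fold farey_step q (r, (a+c,b'+d), t)))"
    have ih: "lt r ?m" "lt ?m t" using Cons.IH[OF ok] by auto
    have mpos: "snd ?m > 0" using fok_mid[OF fok_fold[OF ok, of q]] by simp
    have "lt ?m s" using lt_trans[OF mpos tpos ih(2) ts(2)] .
    then show ?thesis using ih st by simp
  next
    case True
    have st: "farey_step b (r,t,s) = (t, (c+e,d+f), s)" using V True by simp
    have ok: "fok (t, (c+e,d+f), s)" using fok_step[OF Cons.prems, of b] st by simp
    let ?m = "fst (snd (fold farey_step q (t, (c+e,d+f), s)))"
    have ih: "lt t ?m" "lt ?m s" using Cons.IH[OF ok] by auto
    have "lt r ?m" using lt_trans[OF ts(3) tpos ts(1) ih(1)] .
    then show ?thesis using ih st by simp
  qed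
qed

abbreviation mid :: "(nat\<times>nat) \<times> (nat\<times>nat) \<times> (nat\<times>nat) \<Rightarrow> nat\<times>nat" where
  "mid V \<equiv> fst (snd V)"

lemma lt_ne: "lt x y \<Longrightarrow> fst x * snd y \<noteq> fst y * snd x"
  by (cases x; cases y) auto

lemma child_left: "fok V \<Longrightarrow> lt (mid (fold farey_step q (farey_step False V))) (mid V)"
proof -
  assume h: "fok V"
  obtain r t s where V: "V = (r,t,s)" by (metis prod.exhaust)
  obtain a b c d e f where rts: "r = (a,b)" "t = (c,d)" "s = (e,f)" by (metis prod.exhaust)
  have st: "farey_step False V = (r, (a+c,b+d), t)" using V rts by simp
  have ok: "fok (r, (a+c,b+d), t)" using fok_step[OF h, of False] st by simp
  show ?thesis using interval[OF ok, of q] st V by simp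
qed

lemma child_right: "fok V \<Longrightarrow> lt (mid V) (mid (fold farey_step q (farey_step True V)))"
proof -
  assume h: "fok V"
  obtain r t s where V: "V = (r,t,s)" by (metis prod.exhaust)
  obtain a b c d e f where rts: "r = (a,b)" "t = (c,d)" "s = (e,f)" by (metis prod.exhaust)
  have st: "farey_step True V = (t, (c+e,d+f), s)" using V rts by simp
  have ok: "fok (t, (c+e,d+f), s)" using fok_step[OF h, of True] st by simp
  show ?thesis using interval[OF ok, of q] st V by simp
qed

lemma child_lt: "fok V \<Longrightarrow> lt (mid (fold farey_step q1 (farey_step False V))) (mid (fold farey_step q2 (farey_step True V)))"
proof -
  assume h: "fok V"
  have p1: "snd (mid (fold farey_step q1 (farey_step False V))) > 0"
    using fok_mid[OF fok_fold[OF fok_step[OF h]]] by blast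
  have p2: "snd (mid V) > 0" using fok_mid[OF h] by blast
  show ?thesis using lt_trans[OF p1 p2 child_left[OF h] child_right[OF h]] .
qed

lemma uniq: "fok V \<Longrightarrow> q1 \<noteq> q2 \<Longrightarrow>
  fst (mid (fold farey_step q1 V)) * snd (mid (fold farey_step q2 V)) \<noteq> fst (mid (fold farey_step q2 V)) * snd (mid (fold farey_step q1 V))"
proof (induction q1 arbitrary: q2 V)
  case Nil
  then obtain b q where q2: "q2 = b # q" by (cases q2) auto
  show ?case
  proof (cases b)
    case False
    then show ?thesis using lt_ne[OF child_left[OF Nil.prems(1), of q]] q2 by auto
  next
    case True
    then show ?thesis using lt_ne[OF child_right[OF Nil.prems(1), of q]] q2 by auto
  qed
next
  case (Cons b1 q1)
  show ?case
  proof (cases q2)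
    case Nil
    show ?thesis
    proof (cases b1)
      case False
      then show ?thesis using lt_ne[OF child_left[OF Cons.prems(1), of q1]] Nil by auto
    next
      case True
      then show ?thesis using lt_ne[OF child_right[OF Cons.prems(1), of q1]] Nil by auto
    qed
  next
    case q2: (Cons b2 q2')
    show ?thesis
    proof (cases "b1 = b2")
      case True
      then have "q1 \<noteq> q2'" using Cons.prems q2 by simp
      then show ?thesis using Cons.IH[OF fok_step[OF Cons.prems(1)]] True q2 by simp
    next
      case False
      show ?thesis
      proof (cases b1)
        case b1: False
        with False have "b2 = True" by simp
        then show ?thesis using lt_ne[OF child_lt[OF Cons.prems(1), of q1 q2']] b1 q2 by auto
      next
        case b1: True
        with False have "b2 = False" by simp
        then show ?thesis using lt_ne[OF child_lt[OF Cons.prems(1), of q2' q1]] b1 q2 by auto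
      qed
    qed
  qed
qed

lemma frac_eq: "snd x > 0 \<Longrightarrow> snd y > 0 \<Longrightarrow> frac_val x = frac_val y \<Longrightarrow> fst x * snd y = fst y * snd x"
proof -
  assume h: "snd x > 0" "snd y > 0" "frac_val x = frac_val y"
  then have "(of_nat (fst x) :: rat) * of_nat (snd y) = of_nat (fst y) * of_nat (snd x)"
    by (simp add: frac_val_def field_simps)
  then show ?thesis by (metis of_nat_eq_iff of_nat_mult)
qed

lemma the_path: "(THE p'. frac_val (mid (farey_vertex p')) = frac_val (mid (farey_vertex p))) = p"
proof (rule the_equality)
  fix p' assume h: "frac_val (mid (farey_vertex p')) = frac_val (mid (farey_vertex p))"
  show "p' = p"
  proof (rule ccontr)
    assume ne: "p' \<noteq> p"
    have "snd (mid (farey_vertex p')) > 0" "snd (mid (farey_vertex p)) > 0"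
      unfolding farey_vertex_def using fok_mid[OF fok_fold[OF fok_root]] by auto
    from frac_eq[OF this h] uniq[OF fok_root ne] show False unfolding farey_vertex_def by simp
  qed
qed simp

lemma frac_ne0: "frac_val (mid (farey_vertex p)) \<noteq> 0"
proof -
  have "fst (mid (farey_vertex p)) > 0" "snd (mid (farey_vertex p)) > 0"
    unfolding farey_vertex_def using fok_mid[OF fok_fold[OF fok_root]] by auto
  then show ?thesis by (simp add: frac_val_def)
qed


lemma fv_snoc: "farey_vertex (p @ [b]) = farey_step b (farey_vertex p)"
  by (simp add: farey_vertex_def)
lemma wv_snoc: "word_vertex (p @ [b]) = word_step b (word_vertex p)"
  by (simp add: word_vertex_def)

lemma mid_pos: "snd (mid (farey_vertex p)) > 0"
  unfolding farey_vertex_def using fok_mid[OF fok_fold[OF fok_root]] by auto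

lemma Omega_mid: "Omega (frac_val (mid (farey_vertex p))) = fst (snd (word_vertex p))"
  unfolding Omega_def using frac_ne0[of p] the_path[of p] by simp

lemma Omega_frac_mid: "Omega_frac (mid (farey_vertex p)) = fst (snd (word_vertex p))"
  using mid_pos[of p] Omega_mid[of p] by (simp add: Omega_frac_def)

lemma sides: "Omega_frac (fst (farey_vertex p)) = fst (word_vertex p) \<and>
  Omega_frac (snd (snd (farey_vertex p))) = snd (snd (word_vertex p))"
proof (induction p rule: rev_induct)
  case Nil
  show ?case by (simp add: farey_vertex_def word_vertex_def Omega_frac_def Omega_def frac_val_def)
next
  case (snoc b p)
  obtain r t s where F: "farey_vertex p = (r,t,s)" by (metis prod.exhaust)
  obtain a1 a2 c1 c2 e1 e2 where rts: "r = (a1,a2)" "t = (c1,c2)" "s = (e1,e2)" by (metis prod.exhaust)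
  obtain A B C where W: "word_vertex p = (A,B,C)" by (metis prod.exhaust)
  have ih: "Omega_frac r = A" "Omega_frac s = C" using snoc F W by auto
  have m: "Omega_frac t = B" using Omega_frac_mid[of p] F W by simp
  show ?case
  proof (cases b)
    case False
    then show ?thesis using ih m F W rts by (simp add: fv_snoc wv_snoc)
  next
    case True
    then show ?thesis using ih m F W rts by (simp add: fv_snoc wv_snoc)
  qed
qed

theorem lemma3p8:
  fixes p :: path and r t s :: "nat \<times> nat"
  assumes "farey_vertex p = (r, t, s)"
  shows "Omega (frac_val t) = finv (Omega_frac r) \<cdot> (gx \<cdot> gy \<cdot> gz) \<cdot> finv (Omega_frac s)"
proof -
  obtain A B C where W: "word_vertex p = (A,B,C)" by (metis prod.exhaust)
  have 1: "Omega (frac_val t) = B" using Omega_mid[of p] assms W by simp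
  have 2: "Omega_frac r = A" "Omega_frac s = C" using sides[of p] assms W by auto
  have "B = finv A \<cdot> X \<cdot> finv C" using winv_vertex[of p] W by (simp add: winv_def)
  then show ?thesis using 1 2 by (simp add: X_def)
qed

end
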